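(* In the line network model (see context) with any erasure probabilities $p_1,\dots,p_\ell\in[0,1)$, let $T^{(1)}_n:=\sigma_n=\min\{t:\rho_2(t)=n\}$ be the time for all $n$ packets to cross the first link and $\tau_n:=T_n-T^{(1)}_n$ the additional time for the remaining innovative packets at nodes $N^{(2)},\dots,N^{(\ell)}$ to reach the destination. Then $\mathbb{E}T^{(1)}_n=\frac{n}{1-p_1}$ and $\mathbb{E}\tau_n\le\mathbb{E}\tau_{n+1}$ for all $n\ge1$ (where $\tau_{n+1}$ refers to the same model with $n+1$ source packets).
   Context: Line network model. Fix integers $\ell\ge1$, $n\ge1$ and erasure probabilities $p_1,\dots,p_\ell\in[0,1)$. Let $\{z_{t,i}\}$ be independent Bernoulli variables with $\mathbb{P}(z_{t,i}=1)=1-p_i$. The rank $\rho_i(t)$ of node $N^{(i)}$ after $t$ steps satisfies $\rho_1(t)=n$, $\rho_i(0)=0$ for $i\ge2$, and $\rho_{i+1}(t)=\rho_{i+1}(t-1)+z_{t,i}\mathbf 1\{\rho_i(t-1)>\rho_{i+1}(t-1)\}$ for $t\ge1$, $1\le i\le\ell$. The completion time is $T_n:=\min\{t\ge0:\rho_{\ell+1}(t)=n\}$. *)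

theory Defs
  imports "HOL-Probability.Probability"
begin

text \<open>Rank of node i (i = 1..l+1) after t steps, with n source packets and
  erasure indicators z t i (z t i = True means link i succeeds at step t).\<close>
primrec rho :: "nat \<Rightarrow> (nat \<Rightarrow> nat \<Rightarrow> bool) \<Rightarrow> nat \<Rightarrow> nat \<Rightarrow> nat" where
  "rho n z 0 i = (if i = 1 then n else 0)"
| "rho n z (Suc t) i =
     (if i \<le> 1 then n
      else rho n z t i +
           (if z (Suc t) (i - 1) \<and> rho n z t (i - 1) > rho n z t i then 1 else 0))"

definition hit :: "(nat \<Rightarrow> bool) \<Rightarrow> ennreal" where
  "hit P = (if \<exists>t. P t then of_nat (LEAST t. P t) else \<infinity>)"

definition completion_time :: "nat \<Rightarrow> nat \<Rightarrow> (nat \<Rightarrow> nat \<Rightarrow> bool) \<Rightarrow> ennreal" where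
  "completion_time l n z = hit (\<lambda>t. rho n z t (l + 1) = n)"

definition first_link_time :: "nat \<Rightarrow> (nat \<Rightarrow> nat \<Rightarrow> bool) \<Rightarrow> ennreal" where
  "first_link_time n z = hit (\<lambda>t. rho n z t 2 = n)"

definition erasure_space :: "(nat \<Rightarrow> real) \<Rightarrow> ((nat \<times> nat) \<Rightarrow> bool) measure" where
  "erasure_space p = PiM UNIV (\<lambda>(t, i). measure_pmf (bernoulli_pmf (1 - p i)))"

end

theory Submission
  imports Defs
begin

definition Bm :: "(nat \<Rightarrow> real) \<Rightarrow> nat \<Rightarrow> bool measure" where
  "Bm p i = measure_pmf (bernoulli_pmf (1 - p i))"

definition Sl :: "(nat \<Rightarrow> real) \<Rightarrow> (nat \<Rightarrow> bool) measure" where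
  "Sl p = PiM UNIV (Bm p)"

definition consw :: "(nat \<Rightarrow> bool) \<times> ((nat \<times> nat) \<Rightarrow> bool) \<Rightarrow> (nat \<times> nat) \<Rightarrow> bool" where
  "consw xw = (\<lambda>j. if fst j = 1 then fst xw (snd j) else if fst j = 0 then snd xw (0, snd j)
                    else snd xw (fst j - 1, snd j))"

definition shw :: "nat \<Rightarrow> ((nat \<times> nat) \<Rightarrow> bool) \<Rightarrow> (nat \<times> nat) \<Rightarrow> bool" where
  "shw k \<omega> = (\<lambda>j. if fst j = 0 then \<omega> j else \<omega> (fst j + k, snd j))"

lemma erasure_space_alt: "erasure_space p = PiM UNIV (\<lambda>j. Bm p (snd j))"
  by (simp add: erasure_space_def Bm_def split_beta')

lemma space_Bm[simp]: "space (Bm p i) = UNIV" and sets_Bm[simp]: "sets (Bm p i) = UNIV"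
  by (simp_all add: Bm_def)

lemma prob_Bm: "prob_space (Bm p i)" by (simp add: Bm_def prob_space_measure_pmf)

lemma space_E[simp]: "space (erasure_space p) = UNIV"
  by (simp add: erasure_space_alt space_PiM)

lemma space_Sl[simp]: "space (Sl p) = UNIV"
  by (simp add: Sl_def space_PiM)

lemma prob_E: "prob_space (erasure_space p)"
  unfolding erasure_space_alt by (intro prob_space_PiM) (auto simp: prob_Bm)

lemma prob_Sl: "prob_space (Sl p)"
  unfolding Sl_def by (intro prob_space_PiM) (auto simp: prob_Bm)

lemma meas_Bm_iff: "measurable N (Bm p i) = measurable N (count_space UNIV)"
  by (rule measurable_cong_sets) auto

lemma coord_meas_E[measurable]: "(\<lambda>\<omega>. \<omega> j) \<in> measurable (erasure_space p) (count_space UNIV)"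
proof -
  have "(\<lambda>\<omega>. \<omega> j) \<in> measurable (erasure_space p) (Bm p (snd j))"
    unfolding erasure_space_alt by (rule measurable_component_singleton) simp
  then show ?thesis by (simp add: meas_Bm_iff)
qed

lemma coord_meas_Sl[measurable]: "(\<lambda>\<omega>. \<omega> j) \<in> measurable (Sl p) (count_space UNIV)"
proof -
  have "(\<lambda>\<omega>. \<omega> j) \<in> measurable (Sl p) (Bm p j)"
    unfolding Sl_def by (rule measurable_component_singleton) simp
  then show ?thesis by (simp add: meas_Bm_iff)
qed

lemma consw_meas: "consw \<in> measurable (Sl p \<Otimes>\<^sub>M erasure_space p) (erasure_space p)"
proof -
  have "(\<lambda>xw. consw xw j) \<in> measurable (Sl p \<Otimes>\<^sub>M erasure_space p) (Bm p (snd j))" for j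
  proof -
    have a: "(\<lambda>xw. fst xw (snd j)) \<in> measurable (Sl p \<Otimes>\<^sub>M erasure_space p) (count_space UNIV)"
      by (rule measurable_compose[OF measurable_fst coord_meas_Sl])
    have b: "(\<lambda>xw. snd xw j') \<in> measurable (Sl p \<Otimes>\<^sub>M erasure_space p) (count_space UNIV)" for j'
      by (rule measurable_compose[OF measurable_snd coord_meas_E])
    show ?thesis unfolding meas_Bm_iff consw_def
      using a b by (cases "fst j = 1"; cases "fst j = 0") simp_all
  qed
  then show ?thesis
    unfolding erasure_space_alt[of p]
    by (intro measurable_PiM_single'[where f="\<lambda>j xw. consw xw j", simplified]) auto
qed

lemma shw_meas: "shw k \<in> measurable (erasure_space p) (erasure_space p)"
proof -
  have "(\<lambda>\<omega>. shw k \<omega> j) \<in> measurable (erasure_space p) (Bm p (snd j))" for j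
    unfolding meas_Bm_iff shw_def by (cases "fst j = 0") simp_all
  then show ?thesis
    unfolding erasure_space_alt[of p]
    by (intro measurable_PiM_single'[where f="\<lambda>j \<omega>. shw k \<omega> j", simplified]) auto
qed

lemma prod_emb_simple:
  assumes "\<And>j. space (M j) = UNIV"
  shows "prod_emb UNIV M K (PiE K A) = {\<omega>. \<forall>j\<in>K. \<omega> j \<in> A j}"
  using assms by (auto simp: prod_emb_def PiE_iff)

lemma consw_one: "consw (x,\<omega>) (1,i) = x i"
  by (simp add: consw_def)

lemma consw_g: "consw (x,\<omega>) (if fst j = 0 then j else (Suc (fst j), snd j)) = \<omega> j"
  by (cases j) (simp add: consw_def)

lemma consw_other: "fst j \<noteq> 1 \<Longrightarrow> consw (x,\<omega>) j = \<omega> (if fst j = 0 then j else (fst j - 1, snd j))"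
  by (cases j) (simp add: consw_def)

lemma g_g': "fst j \<noteq> 1 \<Longrightarrow>
   (\<lambda>j::nat\<times>nat. if fst j = 0 then j else (Suc (fst j), snd j)) ((\<lambda>j::nat\<times>nat. if fst j = 0 then j else (fst j - 1, snd j)) j) = j"
  by (cases j) auto

lemma pre_eq:
  fixes J :: "(nat \<times> nat) set"
  defines "g \<equiv> (\<lambda>j::nat\<times>nat. if fst j = 0 then j else (Suc (fst j), snd j))"
  shows "(\<forall>j\<in>J. consw (x,\<omega>) j \<in> A j) \<longleftrightarrow>
     (\<forall>i\<in>(\<lambda>i. (1::nat, i)) -` J. x i \<in> A (1,i)) \<and> (\<forall>j\<in>g -` J. \<omega> j \<in> A (g j))"
proof
  assume asm: "\<forall>j\<in>J. consw (x,\<omega>) j \<in> A j"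
  show "(\<forall>i\<in>(\<lambda>i. (1::nat, i)) -` J. x i \<in> A (1,i)) \<and> (\<forall>j\<in>g -` J. \<omega> j \<in> A (g j))"
  proof (intro conjI ballI)
    fix i assume i: "i \<in> (\<lambda>i. (1::nat, i)) -` J"
    have "(1,i) \<in> J" using i by simp
    then have "consw (x,\<omega>) (1,i) \<in> A (1,i)" using asm by blast
    then show "x i \<in> A (1,i)" by (simp only: consw_one)
  next
    fix j assume j: "j \<in> g -` J"
    have "g j \<in> J" using j by simp
    then have "consw (x,\<omega>) (g j) \<in> A (g j)" using asm by blast
    then show "\<omega> j \<in> A (g j)" unfolding g_def consw_g .
  qed
next
  assume h: "(\<forall>i\<in>(\<lambda>i. (1::nat, i)) -` J. x i \<in> A (1,i)) \<and> (\<forall>j\<in>g -` J. \<omega> j \<in> A (g j))"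
  then have h1: "\<forall>i\<in>(\<lambda>i. (1::nat, i)) -` J. x i \<in> A (1,i)" and h2: "\<forall>j\<in>g -` J. \<omega> j \<in> A (g j)"
    by blast+
  show "\<forall>j\<in>J. consw (x,\<omega>) j \<in> A j"
  proof
    fix j assume j: "j \<in> J"
    show "consw (x,\<omega>) j \<in> A j"
    proof (cases "fst j = 1")
      case True
      have jj: "j = (1, snd j)" using True by (cases j) simp
      have "(1, snd j) \<in> J" using j by (simp only: jj[symmetric])
      then have "snd j \<in> (\<lambda>i. (1::nat, i)) -` J" by simp
      then have "x (snd j) \<in> A (1, snd j)" using h1 by blast
      then have "consw (x,\<omega>) (1, snd j) \<in> A (1, snd j)" by (simp only: consw_one)
      then show ?thesis by (simp only: jj[symmetric])
    next
      case False
      define j' where "j' = (if fst j = 0 then j else (fst j - 1, snd j))"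
      have gg: "g j' = j" unfolding g_def j'_def by (rule g_g'[OF False])
      then have "j' \<in> g -` J" using j by simp
      then have "\<omega> j' \<in> A (g j')" using h2 by blast
      moreover have "consw (x,\<omega>) j = \<omega> j'" unfolding j'_def by (rule consw_other[OF False])
      ultimately show ?thesis using gg by simp
    qed
  qed
qed

lemma decomp: "distr (Sl p \<Otimes>\<^sub>M erasure_space p) (erasure_space p) consw = erasure_space p"
proof -
  let ?M = "\<lambda>j::nat\<times>nat. Bm p (snd j)"
  have E: "erasure_space p = PiM UNIV ?M" by (rule erasure_space_alt)
  have meas: "consw \<in> measurable (Sl p \<Otimes>\<^sub>M PiM UNIV ?M) (PiM UNIV ?M)" using consw_meas E by metis
  have PE: "prob_space (PiM UNIV ?M)" using prob_E E by metis
  have SF: "sigma_finite_measure (PiM UNIV ?M)" by (rule prob_space_imp_sigma_finite[OF PE])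
  show ?thesis unfolding E
  proof (rule measure_eqI_PiM_infinite[symmetric, OF refl])
    show "sets (distr (Sl p \<Otimes>\<^sub>M PiM UNIV ?M) (PiM UNIV ?M) consw) = sets (PiM UNIV ?M)" by simp
    show "finite_measure (PiM UNIV ?M)" using PE by (simp add: prob_space_def)
    fix J A assume J: "finite J" "J \<subseteq> (UNIV :: (nat\<times>nat) set)"
      and A: "\<And>j. j \<in> J \<Longrightarrow> A j \<in> sets (?M j)"
    define J1 where "J1 = (\<lambda>i. (1::nat, i)) -` J"
    define g where "g = (\<lambda>j::nat\<times>nat. if fst j = 0 then j else (Suc (fst j), snd j))"
    define g' where "g' = (\<lambda>j::nat\<times>nat. if fst j = 0 then j else (fst j - 1, snd j))"
    define J2 where "J2 = g -` J"
    have inj_g: "inj g" by (auto simp: g_def inj_def prod_eq_iff split: if_splits)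
    have fin1: "finite J1" unfolding J1_def by (rule finite_vimageI[OF J(1)]) (auto simp: inj_def)
    have fin2: "finite J2" unfolding J2_def by (rule finite_vimageI[OF J(1) inj_g])
    have pre: "consw -` prod_emb UNIV ?M J (PiE J A) \<inter> space (Sl p \<Otimes>\<^sub>M PiM UNIV ?M)
       = prod_emb UNIV (Bm p) J1 (PiE J1 (\<lambda>i. A (1,i))) \<times> prod_emb UNIV ?M J2 (PiE J2 (\<lambda>j. A (g j)))"
    proof -
      have sp: "space (Sl p \<Otimes>\<^sub>M PiM UNIV ?M) = UNIV"
        by (simp add: space_pair_measure space_PiM)
      have e1: "prod_emb UNIV ?M J (PiE J A) = {\<omega>. \<forall>j\<in>J. \<omega> j \<in> A j}"
        by (rule prod_emb_simple) simp
      have e2: "prod_emb UNIV (Bm p) J1 (PiE J1 (\<lambda>i. A (1,i))) = {x. \<forall>i\<in>J1. x i \<in> A (1,i)}"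
        by (rule prod_emb_simple) simp
      have e3: "prod_emb UNIV ?M J2 (PiE J2 (\<lambda>j. A (g j))) = {\<omega>. \<forall>j\<in>J2. \<omega> j \<in> A (g j)}"
        by (rule prod_emb_simple) simp
      show ?thesis unfolding sp e1 e2 e3
      proof (rule set_eqI)
        fix xw :: "(nat \<Rightarrow> bool) \<times> ((nat \<times> nat) \<Rightarrow> bool)"
        obtain x \<omega> where xw: "xw = (x,\<omega>)" by (cases xw)
        have "(\<forall>j\<in>J. consw (x,\<omega>) j \<in> A j) \<longleftrightarrow> (\<forall>i\<in>J1. x i \<in> A (1,i)) \<and> (\<forall>j\<in>J2. \<omega> j \<in> A (g j))"
          unfolding J1_def J2_def g_def by (rule pre_eq)
        then show "xw \<in> consw -` {\<omega>. \<forall>j\<in>J. \<omega> j \<in> A j} \<inter> UNIV \<longleftrightarrow>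
            xw \<in> {x. \<forall>i\<in>J1. x i \<in> A (1,i)} \<times> {\<omega>. \<forall>j\<in>J2. \<omega> j \<in> A (g j)}"
          unfolding xw by (simp only: vimage_eq Int_UNIV_right mem_Collect_eq mem_Times_iff fst_conv snd_conv)
      qed
    qed
    have X: "prod_emb UNIV ?M J (PiE J A) \<in> sets (PiM UNIV ?M)"
      using J A by (intro sets_PiM_I) auto
    have "distr (Sl p \<Otimes>\<^sub>M PiM UNIV ?M) (PiM UNIV ?M) consw (prod_emb UNIV ?M J (PiE J A))
        = emeasure (Sl p \<Otimes>\<^sub>M PiM UNIV ?M) (prod_emb UNIV (Bm p) J1 (PiE J1 (\<lambda>i. A (1,i))) \<times> prod_emb UNIV ?M J2 (PiE J2 (\<lambda>j. A (g j))))"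
      using X meas by (simp add: emeasure_distr pre)
    also have "\<dots> = emeasure (Sl p) (prod_emb UNIV (Bm p) J1 (PiE J1 (\<lambda>i. A (1,i))))
                   * emeasure (PiM UNIV ?M) (prod_emb UNIV ?M J2 (PiE J2 (\<lambda>j. A (g j))))"
      by (rule sigma_finite_measure.emeasure_pair_measure_Times[OF SF])
         (auto simp: Sl_def fin1 fin2 intro!: sets_PiM_I)
    also have "emeasure (Sl p) (prod_emb UNIV (Bm p) J1 (PiE J1 (\<lambda>i. A (1,i)))) = (\<Prod>i\<in>J1. emeasure (Bm p i) (A (1,i)))"
      unfolding Sl_def by (rule emeasure_PiM_emb) (auto simp: prob_Bm fin1)
    also have "emeasure (PiM UNIV ?M) (prod_emb UNIV ?M J2 (PiE J2 (\<lambda>j. A (g j)))) = (\<Prod>j\<in>J2. emeasure (?M j) (A (g j)))"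
      by (rule emeasure_PiM_emb) (auto simp: prob_Bm fin2)
    also have "(\<Prod>i\<in>J1. emeasure (Bm p i) (A (1,i))) = (\<Prod>j\<in>J \<inter> {j. fst j = 1}. emeasure (?M j) (A j))"
      by (rule prod.reindex_bij_witness[where j="\<lambda>i. (1,i)" and i=snd]) (auto simp: J1_def)
    also have "(\<Prod>j\<in>J2. emeasure (?M j) (A (g j))) = (\<Prod>j\<in>J - {j. fst j = 1}. emeasure (?M j) (A j))"
      by (rule prod.reindex_bij_witness[where j=g and i=g']) (auto simp: J2_def g_def g'_def)
    also have "(\<Prod>j\<in>J \<inter> {j. fst j = 1}. emeasure (?M j) (A j)) * (\<Prod>j\<in>J - {j. fst j = 1}. emeasure (?M j) (A j))
       = (\<Prod>j\<in>J. emeasure (?M j) (A j))"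
      by (rule prod.Int_Diff[symmetric, OF J(1)])
    also have "\<dots> = emeasure (PiM UNIV ?M) (prod_emb UNIV ?M J (PiE J A))"
      by (rule emeasure_PiM_emb[symmetric]) (auto simp: prob_Bm J)
    finally show "emeasure (PiM UNIV ?M) (prod_emb UNIV ?M J (PiE J A)) =
        emeasure (distr (Sl p \<Otimes>\<^sub>M PiM UNIV ?M) (PiM UNIV ?M) consw) (prod_emb UNIV ?M J (PiE J A))" ..
  qed
qed

definition consz :: "(nat \<Rightarrow> bool) \<Rightarrow> (nat \<Rightarrow> nat \<Rightarrow> bool) \<Rightarrow> nat \<Rightarrow> nat \<Rightarrow> bool" where
  "consz x z = (\<lambda>t. if t = 1 then x else if t = 0 then z 0 else z (t - 1))"

definition shz :: "nat \<Rightarrow> (nat \<Rightarrow> nat \<Rightarrow> bool) \<Rightarrow> nat \<Rightarrow> nat \<Rightarrow> bool" where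
  "shz k z = (\<lambda>t. if t = 0 then z 0 else z (t + k))"

lemma curry_consw: "curry (consw (x,\<omega>)) = consz x (curry \<omega>)"
  by (auto simp: fun_eq_iff consw_def consz_def)

lemma curry_shw: "curry (shw k \<omega>) = shz k (curry \<omega>)"
  by (auto simp: fun_eq_iff shw_def shz_def)

fun cnt :: "(nat \<Rightarrow> nat \<Rightarrow> bool) \<Rightarrow> nat \<Rightarrow> nat" where
  "cnt z 0 = 0"
| "cnt z (Suc t) = cnt z t + (if z (Suc t) 1 then 1 else 0)"

lemma rho1[simp]: "rho n z t 1 = n" by (cases t) simp_all
lemma rho1'[simp]: "rho n z t (Suc 0) = n" by (cases t) simp_all

lemma rho2: "rho n z t 2 = min n (cnt z t)"
  by (induction t) (auto simp: rho1 min_def)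

lemma rho_mono_t: "rho n z t i \<le> rho n z (Suc t) i"
  by (cases t; cases i) auto

lemma rho_le_prev: "2 \<le> i \<Longrightarrow> rho n z t i \<le> rho n z t (i - 1)"
proof (induction t)
  case 0 then show ?case by simp
next
  case (Suc t)
  have "rho n z (Suc t) i \<le> rho n z t (i - 1)" using Suc by auto
  also have "\<dots> \<le> rho n z (Suc t) (i - 1)" by (rule rho_mono_t)
  finally show ?case .
qed

lemma rho_le2: "2 \<le> i \<Longrightarrow> rho n z t i \<le> rho n z t 2"
proof (induction i rule: dec_induct)
  case base then show ?case by simp
next
  case (step k)
  have "rho n z t (Suc k) \<le> rho n z t (Suc k - 1)" using step by (intro rho_le_prev) auto
  then show ?case using step by simp
qed

lemma rho_le_n: "1 \<le> i \<Longrightarrow> rho n z t i \<le> n"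
proof (cases "i = 1")
  case True then show ?thesis by (simp add: rho1)
next
  case False
  assume "1 \<le> i"
  then have "rho n z t i \<le> rho n z t 2" using False by (intro rho_le2) auto
  then show ?thesis by (simp add: rho2)
qed

lemma cnt_consz: "cnt (consz x z) (Suc t) = (if x 1 then 1 else 0) + cnt z t"
  by (induction t) (auto simp: consz_def)

lemma cnt_mono: "s \<le> t \<Longrightarrow> cnt z s \<le> cnt z t"
  by (induction t rule: dec_induct) auto

lemma cnt_shift: "cnt z (s + t) = cnt z s + cnt (shz s z) t"
  by (induction t) (auto simp: shz_def add.commute)

lemma hit_shift:
  assumes "\<forall>t<s. \<not> P t"
  shows "hit P = of_nat s + hit (\<lambda>u. P (s + u))"
proof (cases "\<exists>t. P t")
  case True
  then obtain t where t: "P t" by blast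
  then have ts: "s \<le> t" using assms by (meson not_le)
  have ex2: "\<exists>u. P (s + u)" using t ts by (metis le_add_diff_inverse)
  have "(LEAST t. P t) = s + (LEAST u. P (s + u))"
  proof (rule Least_equality)
    show "P (s + (LEAST u. P (s + u)))" using ex2 by (rule LeastI_ex)
    fix y assume "P y"
    then have "s \<le> y" using assms by (meson not_le)
    then have "P (s + (y - s))" using \<open>P y\<close> by simp
    then have "(LEAST u. P (s + u)) \<le> y - s" by (rule Least_le)
    then show "s + (LEAST u. P (s + u)) \<le> y" using \<open>s \<le> y\<close> by simp
  qed
  then show ?thesis using True ex2 by (simp add: hit_def)
next
  case False
  then show ?thesis by (simp add: hit_def)
qed

lemma hit_mono:
  assumes "\<And>t. P t \<Longrightarrow> Q t"
  shows "hit Q \<le> hit P"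
proof (cases "\<exists>t. P t")
  case True
  then have "Q (LEAST t. P t)" using assms by (meson LeastI_ex)
  then have "(LEAST t. Q t) \<le> (LEAST t. P t)" by (rule Least_le)
  then show ?thesis using True assms by (auto simp: hit_def)
next
  case False
  then show ?thesis by (simp add: hit_def)
qed

lemma suminf_one_ennreal: "(\<Sum>k::nat. (1::ennreal)) = \<infinity>"
proof (rule ccontr)
  assume "(\<Sum>k::nat. (1::ennreal)) \<noteq> \<infinity>"
  then have "(\<Sum>k::nat. ennreal 1) \<noteq> top" by simp
  then have "summable (\<lambda>k::nat. (1::real))" by (intro summable_suminf_not_top) auto
  then show False by (simp add: summable_const_iff)
qed

lemma hit_tail:
  assumes mono: "\<And>t. P t \<Longrightarrow> P (Suc t)"
  shows "hit P = (\<Sum>k. if P k then 0 else 1)"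
proof (cases "\<exists>t. P t")
  case True
  define m where "m = (LEAST t. P t)"
  have Pm: "P m" unfolding m_def using True by (rule LeastI_ex)
  have iff: "P k \<longleftrightarrow> m \<le> k" for k
  proof
    assume "P k" then show "m \<le> k" unfolding m_def by (rule Least_le)
  next
    assume "m \<le> k" then show "P k"
      by (induction k rule: dec_induct) (use Pm mono in auto)
  qed
  have "(\<Sum>k. if P k then 0 else 1 :: ennreal) = (\<Sum>k\<in>{..<m}. if P k then 0 else 1)"
    by (rule suminf_finite) (auto simp: iff)
  also have "\<dots> = (\<Sum>k\<in>{..<m}. 1)" by (rule sum.cong) (auto simp: iff)
  finally show ?thesis using True by (simp add: hit_def m_def)
next
  case False
  then show ?thesis by (simp add: hit_def suminf_one_ennreal)
qed

lemma meas_cs2: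
  fixes f :: "'a \<Rightarrow> 'b::countable" and g :: "'a \<Rightarrow> 'c::countable"
  assumes f: "f \<in> measurable M (count_space UNIV)" and g: "g \<in> measurable M (count_space UNIV)"
  shows "(\<lambda>x. F (f x) (g x)) \<in> measurable M (count_space UNIV)"
proof -
  have "(\<lambda>x. (\<lambda>a x. F a (g x)) (f x) x) \<in> measurable M (count_space UNIV)"
  proof (rule measurable_compose_countable[OF _ f])
    fix a show "(\<lambda>x. F a (g x)) \<in> measurable M (count_space UNIV)"
      by (rule measurable_compose[OF g]) simp
  qed
  then show ?thesis by simp
qed

lemma meas_cs1:
  fixes f :: "'a \<Rightarrow> 'b::countable"
  assumes f: "f \<in> measurable M (count_space UNIV)"
  shows "(\<lambda>x. F (f x)) \<in> measurable M (count_space UNIV)"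
  by (rule measurable_compose[OF f]) simp

lemma pred_set: "Q \<in> measurable M (count_space UNIV) \<Longrightarrow> {x \<in> space M. Q x} \<in> sets M"
proof -
  assume Q: "Q \<in> measurable M (count_space UNIV)"
  have "Q -` {True} \<inter> space M \<in> sets M" by (rule measurable_sets[OF Q]) auto
  moreover have "Q -` {True} \<inter> space M = {x \<in> space M. Q x}" by auto
  ultimately show ?thesis by simp
qed

lemma cnt_meas: "(\<lambda>\<omega>. cnt (curry \<omega>) t) \<in> measurable (erasure_space p) (count_space UNIV)"
proof (induction t)
  case 0 then show ?case by simp
next
  case (Suc t)
  have "(\<lambda>\<omega>. (\<lambda>a b. a + (if b then 1 else 0)) (cnt (curry \<omega>) t) (\<omega> (Suc t, 1)))
      \<in> measurable (erasure_space p) (count_space UNIV)"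
    by (rule meas_cs2[OF Suc coord_meas_E])
  then show ?case unfolding curry_def by simp
qed

lemma rho_meas: "(\<lambda>\<omega>. rho n (curry \<omega>) t i) \<in> measurable (erasure_space p) (count_space UNIV)"
proof (induction t arbitrary: i)
  case 0 then show ?case by simp
next
  case (Suc t)
  have m1: "(\<lambda>\<omega>. (rho n (curry \<omega>) t i, rho n (curry \<omega>) t (i - 1))) \<in> measurable (erasure_space p) (count_space UNIV)"
    by (rule meas_cs2[OF Suc Suc])
  have eq: "(\<lambda>\<omega>. rho n (curry \<omega>) (Suc t) i) = (\<lambda>\<omega>. (\<lambda>ab c. if i \<le> 1 then n else fst ab + (if c \<and> snd ab > fst ab then 1 else 0))
          (rho n (curry \<omega>) t i, rho n (curry \<omega>) t (i - 1)) (\<omega> (Suc t, i - 1)))"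
    by (rule ext) (simp only: rho.simps curry_conv prod.sel)
  show ?case unfolding eq by (rule meas_cs2[OF m1 coord_meas_E])
qed

lemma hit_meas:
  assumes P: "\<And>t. (\<lambda>\<omega>. P t \<omega>) \<in> measurable M (count_space UNIV)"
  shows "(\<lambda>\<omega>. hit (\<lambda>t. P t \<omega>)) \<in> borel_measurable M"
  unfolding hit_def
proof (rule measurable_If)
  show "(\<lambda>\<omega>. of_nat (LEAST t. P t \<omega>) :: ennreal) \<in> borel_measurable M"
    by (rule measurable_compose[OF measurable_Least[OF P]]) simp
  show "(\<lambda>\<omega>. \<infinity> :: ennreal) \<in> borel_measurable M" by simp
  show "{\<omega> \<in> space M. \<exists>t. P t \<omega>} \<in> sets M"
    by (rule sets.sets_Collect_countable_Ex) (rule pred_set[OF P])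
qed

definition s1 :: "((nat \<times> nat) \<Rightarrow> bool) \<Rightarrow> nat" where
  "s1 \<omega> = (LEAST t. 1 \<le> cnt (curry \<omega>) t)"

definition hK :: "(((nat \<times> nat) \<Rightarrow> bool) \<Rightarrow> ennreal) \<Rightarrow> nat \<Rightarrow> ((nat \<times> nat) \<Rightarrow> bool) \<Rightarrow> ennreal" where
  "hK g K \<omega> = (if 1 \<le> cnt (curry \<omega>) K then g (shw (s1 \<omega>) \<omega>) else 0)"

definition hinf :: "(((nat \<times> nat) \<Rightarrow> bool) \<Rightarrow> ennreal) \<Rightarrow> ((nat \<times> nat) \<Rightarrow> bool) \<Rightarrow> ennreal" where
  "hinf g \<omega> = (if \<exists>t. 1 \<le> cnt (curry \<omega>) t then g (shw (s1 \<omega>) \<omega>) else 0)"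

lemma cond_meas: "(\<lambda>\<omega>. 1 \<le> cnt (curry \<omega>) t) \<in> measurable (erasure_space p) (count_space UNIV)"
  by (rule meas_cs1[OF cnt_meas])

lemma s1_meas: "s1 \<in> measurable (erasure_space p) (count_space UNIV)"
  unfolding s1_def by (rule measurable_Least[OF cond_meas])

lemma gshift_meas:
  assumes g: "g \<in> borel_measurable (erasure_space p)"
  shows "(\<lambda>\<omega>. g (shw (s1 \<omega>) \<omega>)) \<in> borel_measurable (erasure_space p)"
proof (rule measurable_compose_countable[where f="\<lambda>k \<omega>. g (shw k \<omega>)", OF _ s1_meas])
  fix k show "(\<lambda>\<omega>. g (shw k \<omega>)) \<in> borel_measurable (erasure_space p)"
    by (rule measurable_compose[OF shw_meas g])
qed

lemma hK_meas:
  assumes g: "g \<in> borel_measurable (erasure_space p)"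
  shows "hK g K \<in> borel_measurable (erasure_space p)"
  unfolding hK_def[abs_def]
  by (rule measurable_If[OF gshift_meas[OF g] _ pred_set[OF cond_meas]]) simp

lemma hinf_meas:
  assumes g: "g \<in> borel_measurable (erasure_space p)"
  shows "hinf g \<in> borel_measurable (erasure_space p)"
  unfolding hinf_def[abs_def]
  apply (rule measurable_If[OF gshift_meas[OF g]])
   apply simp
  apply (rule sets.sets_Collect_countable_Ex)
  apply (rule pred_set[OF cond_meas])
  done

lemma int_decomp:
  assumes f: "f \<in> borel_measurable (erasure_space p)"
  shows "(\<integral>\<^sup>+\<omega>. f \<omega> \<partial>erasure_space p) = (\<integral>\<^sup>+x. \<integral>\<^sup>+\<omega>. f (consw (x,\<omega>)) \<partial>erasure_space p \<partial>Sl p)"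
proof -
  have "(\<integral>\<^sup>+\<omega>. f \<omega> \<partial>erasure_space p) = (\<integral>\<^sup>+\<omega>. f \<omega> \<partial>distr (Sl p \<Otimes>\<^sub>M erasure_space p) (erasure_space p) consw)"
    by (simp only: decomp)
  also have "\<dots> = (\<integral>\<^sup>+xw. f (consw xw) \<partial>(Sl p \<Otimes>\<^sub>M erasure_space p))"
    by (rule nn_integral_distr[OF consw_meas]) (simp add: f)
  also have "\<dots> = (\<integral>\<^sup>+x. \<integral>\<^sup>+\<omega>. f (consw (x,\<omega>)) \<partial>erasure_space p \<partial>Sl p)"
    by (rule sigma_finite_measure.nn_integral_fst[symmetric, OF prob_space_imp_sigma_finite[OF prob_E]])
       (rule measurable_compose[OF consw_meas f])
  finally show ?thesis .
qed

lemma int_bern: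
  assumes p: "0 \<le> p 1" "p 1 \<le> 1"
  shows "(\<integral>\<^sup>+x. (if x 1 then a else b) \<partial>Sl p) = ennreal (1 - p 1) * a + ennreal (p 1) * b"
proof -
  let ?h = "\<lambda>y::bool. if y then a else b"
  have md: "measurable (Bm p 1) N = measurable (count_space UNIV) N" for N :: "ennreal measure"
    by (rule measurable_cong_sets) auto
  have hm: "?h \<in> borel_measurable (Bm p 1)" unfolding md by simp
  have "(\<integral>\<^sup>+y. ?h y \<partial>Bm p 1) = (\<integral>\<^sup>+y. ?h y \<partial>distr (Sl p) (Bm p 1) (\<lambda>\<omega>. \<omega> 1))"
    unfolding Sl_def by (simp add: distr_PiM_component prob_Bm)
  also have "\<dots> = (\<integral>\<^sup>+x. ?h (x 1) \<partial>Sl p)"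
  proof -
    have mc: "(\<lambda>\<omega>. \<omega> 1) \<in> measurable (Sl p) (Bm p 1)"
      unfolding Sl_def by (rule measurable_component_singleton) simp
    have hm': "?h \<in> borel_measurable (distr (Sl p) (Bm p 1) (\<lambda>\<omega>. \<omega> 1))"
      unfolding measurable_distr_eq1 by (rule hm)
    show ?thesis by (rule nn_integral_distr[OF mc hm'])
  qed
  finally have eq: "(\<integral>\<^sup>+x. ?h (x 1) \<partial>Sl p) = (\<integral>\<^sup>+y. ?h y \<partial>Bm p 1)" ..
  have "(\<integral>\<^sup>+y. ?h y \<partial>Bm p 1) = (\<Sum>y\<in>UNIV. ?h y * pmf (bernoulli_pmf (1 - p 1)) y)"
    unfolding Bm_def by (rule nn_integral_measure_pmf_support) auto
  also have "\<dots> = ennreal (1 - p 1) * a + ennreal (p 1) * b"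
    using p by (simp add: UNIV_bool mult.commute)
  finally show ?thesis using eq by simp
qed

lemma step_int:
  assumes f: "f \<in> borel_measurable (erasure_space p)"
    and F: "F \<in> borel_measurable (erasure_space p)" and G: "G \<in> borel_measurable (erasure_space p)"
    and rec: "\<And>x \<omega>. f (consw (x,\<omega>)) = (if x 1 then F \<omega> else G \<omega>)"
    and p: "0 \<le> p 1" "p 1 \<le> 1"
  shows "(\<integral>\<^sup>+\<omega>. f \<omega> \<partial>erasure_space p) =
     ennreal (1 - p 1) * (\<integral>\<^sup>+\<omega>. F \<omega> \<partial>erasure_space p) + ennreal (p 1) * (\<integral>\<^sup>+\<omega>. G \<omega> \<partial>erasure_space p)"
proof -
  have "(\<integral>\<^sup>+\<omega>. f \<omega> \<partial>erasure_space p) = (\<integral>\<^sup>+x. \<integral>\<^sup>+\<omega>. f (consw (x,\<omega>)) \<partial>erasure_space p \<partial>Sl p)"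
    by (rule int_decomp[OF f])
  also have "\<dots> = (\<integral>\<^sup>+x. (if x 1 then (\<integral>\<^sup>+\<omega>. F \<omega> \<partial>erasure_space p) else (\<integral>\<^sup>+\<omega>. G \<omega> \<partial>erasure_space p)) \<partial>Sl p)"
    by (rule nn_integral_cong) (simp add: rec)
  also have "\<dots> = ennreal (1 - p 1) * (\<integral>\<^sup>+\<omega>. F \<omega> \<partial>erasure_space p) + ennreal (p 1) * (\<integral>\<^sup>+\<omega>. G \<omega> \<partial>erasure_space p)"
    by (rule int_bern[where p=p, OF p])
  finally show ?thesis .
qed

lemma cnt0_consz: "cnt (consz x z) 0 = 0" by simp

lemma s1_consw_True:
  assumes "x 1"
  shows "s1 (consw (x,\<omega>)) = 1"
  unfolding s1_def curry_consw
proof (rule Least_equality)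
  show "1 \<le> cnt (consz x (curry \<omega>)) 1" using assms cnt_consz[of x "curry \<omega>" 0] by simp
  fix y assume "1 \<le> cnt (consz x (curry \<omega>)) y"
  then show "1 \<le> y" by (cases y) auto
qed

lemma s1_consw_False:
  assumes "\<not> x 1" "1 \<le> cnt (curry \<omega>) K"
  shows "s1 (consw (x,\<omega>)) = Suc (s1 \<omega>)"
  unfolding s1_def curry_consw
proof (subst Least_Suc[where n="Suc K"])
  show "1 \<le> cnt (consz x (curry \<omega>)) (Suc K)" using assms by (simp add: cnt_consz del: cnt.simps(2))
  show "\<not> 1 \<le> cnt (consz x (curry \<omega>)) 0" by simp
  show "Suc (LEAST m. 1 \<le> cnt (consz x (curry \<omega>)) (Suc m)) = Suc (LEAST t. 1 \<le> cnt (curry \<omega>) t)"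
    using assms by (simp add: cnt_consz del: cnt.simps(2))
qed

lemma shw1_consw: "shw 1 (consw (x,\<omega>)) = \<omega>"
  by (auto simp: fun_eq_iff shw_def consw_def)

lemma shw1_consw'[simp]: "shw (Suc 0) (consw (x,\<omega>)) = \<omega>"
  by (auto simp: fun_eq_iff shw_def consw_def)

lemma shwSuc_consw: "shw (Suc k) (consw (x,\<omega>)) = shw k \<omega>"
  by (auto simp: fun_eq_iff shw_def consw_def)

lemma hK_rec: "hK g (Suc K) (consw (x,\<omega>)) = (if x 1 then g \<omega> else hK g K \<omega>)"
proof (cases "x 1")
  case True
  then show ?thesis
    by (simp add: hK_def curry_consw cnt_consz s1_consw_True shw1_consw del: cnt.simps(2))
next
  case False
  show ?thesis
  proof (cases "1 \<le> cnt (curry \<omega>) K")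
    case True
    then show ?thesis using False
      by (simp add: hK_def curry_consw cnt_consz s1_consw_False shwSuc_consw del: cnt.simps(2))
  next
    case c: False
    then show ?thesis using False
      by (simp add: hK_def curry_consw cnt_consz del: cnt.simps(2))
  qed
qed

lemma hK0: "hK g 0 \<omega> = 0" by (simp add: hK_def)

lemma SM:
  assumes g: "g \<in> borel_measurable (erasure_space p)"
    and p: "0 \<le> p 1" "p 1 < 1"
  shows "(\<integral>\<^sup>+\<omega>. hinf g \<omega> \<partial>erasure_space p) = (\<integral>\<^sup>+\<omega>. g \<omega> \<partial>erasure_space p)"
proof -
  interpret EP: prob_space "erasure_space p" by (rule prob_E)
  define G where "G = (\<integral>\<^sup>+\<omega>. g \<omega> \<partial>erasure_space p)"
  have closed: "(\<integral>\<^sup>+\<omega>. hK g K \<omega> \<partial>erasure_space p) = ennreal (1 - p 1 ^ K) * G" for K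
  proof (induction K)
    case 0 then show ?case by (simp add: hK0)
  next
    case (Suc K)
    have pk: "p 1 * p 1 ^ K \<le> p 1"
      using mult_left_mono[of "p 1 ^ K" 1 "p 1"] p power_le_one[of "p 1" K] by auto
    have "(\<integral>\<^sup>+\<omega>. hK g (Suc K) \<omega> \<partial>erasure_space p) = ennreal (1 - p 1) * G + ennreal (p 1) * (ennreal (1 - p 1 ^ K) * G)"
      unfolding G_def Suc[symmetric, unfolded G_def]
      by (rule step_int[OF hK_meas[OF g] g hK_meas[OF g] hK_rec]) (use p in auto)
    also have "\<dots> = (ennreal (1 - p 1) + ennreal (p 1 * (1 - p 1 ^ K))) * G"
      using p by (simp add: distrib_right ennreal_mult mult.assoc power_le_one)
    also have "ennreal (1 - p 1) + ennreal (p 1 * (1 - p 1 ^ K)) = ennreal (1 - p 1 ^ Suc K)"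
      using p pk by (subst ennreal_plus[symmetric]) (auto simp: algebra_simps power_le_one intro!: mult_nonneg_nonneg)
    finally show ?case .
  qed
  have sup: "hinf g \<omega> = (SUP K. hK g K \<omega>)" for \<omega>
  proof (cases "\<exists>t. 1 \<le> cnt (curry \<omega>) t")
    case True
    then obtain t where t: "1 \<le> cnt (curry \<omega>) t" by blast
    show ?thesis
    proof (rule antisym)
      show "hinf g \<omega> \<le> (SUP K. hK g K \<omega>)"
        using t True by (intro SUP_upper2[where i=t]) (auto simp: hinf_def hK_def)
      show "(SUP K. hK g K \<omega>) \<le> hinf g \<omega>"
        using True by (intro SUP_least) (auto simp: hinf_def hK_def)
    qed
  next
    case False
    then show ?thesis by (simp add: hinf_def hK_def)
  qed
  have inc: "incseq (\<lambda>K. hK g K)"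
  proof (rule incseq_SucI, rule le_funI)
    fix K \<omega>
    show "hK g K \<omega> \<le> hK g (Suc K) \<omega>"
      using cnt_mono[of K "Suc K" "curry \<omega>"] by (auto simp: hK_def)
  qed
  have "(\<integral>\<^sup>+\<omega>. hinf g \<omega> \<partial>erasure_space p) = (\<integral>\<^sup>+\<omega>. (SUP K. hK g K \<omega>) \<partial>erasure_space p)"
    by (simp add: sup)
  also have "\<dots> = (SUP K. (\<integral>\<^sup>+\<omega>. hK g K \<omega> \<partial>erasure_space p))"
    by (rule nn_integral_monotone_convergence_SUP[OF inc hK_meas[OF g]])
  also have "\<dots> = (SUP K. ennreal (1 - p 1 ^ K) * G)" by (simp add: closed)
  also have "\<dots> = (SUP K. ennreal (1 - p 1 ^ K)) * G" by (simp add: SUP_mult_right_ennreal)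
  also have "(SUP K. ennreal (1 - p 1 ^ K)) = 1"
  proof -
    have lim: "(\<lambda>K. ennreal (1 - p 1 ^ K)) \<longlonglongrightarrow> ennreal (1 - 0)"
      using p by (intro tendsto_ennrealI tendsto_diff tendsto_const LIMSEQ_power_zero) auto
    have pd: "p 1 ^ Suc K \<le> p 1 ^ K" for K by (rule power_decreasing) (use p in auto)
    have incs: "incseq (\<lambda>K. ennreal (1 - p 1 ^ K))"
      by (intro incseq_SucI ennreal_leI) (use pd in auto)
    show ?thesis using LIMSEQ_unique[OF LIMSEQ_SUP[OF incs] lim] by simp
  qed
  finally show ?thesis by (simp add: G_def)
qed

lemma flt_alt: "first_link_time n z = hit (\<lambda>t. n \<le> cnt z t)"
  unfolding first_link_time_def rho2 by (rule arg_cong[where f=hit]) (auto simp: fun_eq_iff min_def)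

lemma first_succ:
  assumes ex: "\<exists>t. 1 \<le> cnt z t"
  shows "cnt z (LEAST t. 1 \<le> cnt z t) = 1" "\<forall>t<(LEAST t. 1 \<le> cnt z t). cnt z t = 0"
proof -
  define s where "s = (LEAST t. 1 \<le> cnt z t)"
  have a: "1 \<le> cnt z s" unfolding s_def using ex by (rule LeastI_ex)
  have b: "\<forall>t<s. cnt z t = 0" unfolding s_def using not_less_Least by fastforce
  have "s \<noteq> 0"
  proof
    assume "s = 0" with a show False by simp
  qed
  then obtain s' where s': "s = Suc s'" by (cases s) auto
  have "cnt z s' = 0" using b s' by auto
  then have "cnt z s \<le> 1" using s' by simp
  then show "cnt z (LEAST t. 1 \<le> cnt z t) = 1" using a s_def by simp
  show "\<forall>t<(LEAST t. 1 \<le> cnt z t). cnt z t = 0" using b s_def by simp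
qed

lemma sigma_split:
  assumes ex: "\<exists>t. 1 \<le> cnt z t"
  shows "hit (\<lambda>t. Suc m \<le> cnt z t) = of_nat (LEAST t. 1 \<le> cnt z t)
           + hit (\<lambda>u. m \<le> cnt (shz (LEAST t. 1 \<le> cnt z t) z) u)"
proof -
  define s where "s = (LEAST t. 1 \<le> cnt z t)"
  note fs = first_succ[OF ex, folded s_def]
  have "hit (\<lambda>t. Suc m \<le> cnt z t) = of_nat s + hit (\<lambda>u. Suc m \<le> cnt z (s + u))"
    by (rule hit_shift) (use fs in auto)
  also have "(\<lambda>u. Suc m \<le> cnt z (s + u)) = (\<lambda>u. m \<le> cnt (shz s z) u)"
    by (auto simp: fun_eq_iff cnt_shift fs)
  finally show ?thesis by (simp add: s_def)
qed

lemma arith_aux: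
  fixes a b a' b' :: nat
  assumes "a \<le> a' + 1" "b \<le> b' + 1"
  shows "a + (if c \<and> b > a then 1 else 0) \<le> a' + (if c \<and> b' > a' then 1 else 0) + 1"
  using assms by (cases c; cases "b > a"; cases "b' > a'") simp_all

lemma coupling:
  assumes "cnt z s = 1"
  shows "\<forall>i\<ge>1. rho (Suc n) z (s + u) i \<le> rho n (shz s z) u i + 1"
proof (induction u)
  case 0
  show ?case
  proof (intro allI impI)
    fix i :: nat assume i: "1 \<le> i"
    show "rho (Suc n) z (s + 0) i \<le> rho n (shz s z) 0 i + 1"
    proof (cases "i = 1")
      case True then show ?thesis by simp
    next
      case False
      then have "rho (Suc n) z s i \<le> rho (Suc n) z s 2" using i by (intro rho_le2) auto
      also have "\<dots> \<le> 1" using assms by (simp add: rho2)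
      finally show ?thesis by simp
    qed
  qed
next
  case (Suc u)
  show ?case
  proof (intro allI impI)
    fix i :: nat assume i: "1 \<le> i"
    show "rho (Suc n) z (s + Suc u) i \<le> rho n (shz s z) (Suc u) i + 1"
    proof (cases "i = 1")
      case True then show ?thesis by simp
    next
      case False
      then obtain j where j: "i = Suc j" "1 \<le> j" using i by (cases i) auto
      have h1: "rho (Suc n) z (s + u) (Suc j) \<le> rho n (shz s z) u (Suc j) + 1" using Suc j by auto
      have h2: "rho (Suc n) z (s + u) j \<le> rho n (shz s z) u j + 1" using Suc j by auto
      have zz: "shz s z (Suc u) j = z (Suc (s + u)) j" by (simp add: shz_def add.commute)
      have e1: "rho (Suc n) z (s + Suc u) i = rho (Suc n) z (s + u) (Suc j) +
         (if z (Suc (s + u)) j \<and> rho (Suc n) z (s + u) j > rho (Suc n) z (s + u) (Suc j) then 1 else 0)"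
        using j by simp
      have e2: "rho n (shz s z) (Suc u) i = rho n (shz s z) u (Suc j) +
         (if z (Suc (s + u)) j \<and> rho n (shz s z) u j > rho n (shz s z) u (Suc j) then 1 else 0)"
        using j zz by simp
      show ?thesis unfolding e1 e2 using h1 h2 by (rule arith_aux)
    qed
  qed
qed

lemma T_split:
  assumes l: "1 \<le> l" and ex: "\<exists>t. 1 \<le> cnt z t"
  shows "of_nat (LEAST t. 1 \<le> cnt z t) + completion_time l n (shz (LEAST t. 1 \<le> cnt z t) z)
           \<le> completion_time l (Suc n) z"
proof -
  define s where "s = (LEAST t. 1 \<le> cnt z t)"
  note fs = first_succ[OF ex, folded s_def]
  have before: "\<forall>t<s. \<not> rho (Suc n) z t (l + 1) = Suc n"
  proof (intro allI impI)
    fix t assume "t < s"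
    have "rho (Suc n) z t (l + 1) \<le> rho (Suc n) z t 2" using l by (intro rho_le2) auto
    also have "\<dots> = 0" using fs \<open>t < s\<close> by (simp add: rho2)
    finally show "\<not> rho (Suc n) z t (l + 1) = Suc n" by simp
  qed
  have "completion_time l (Suc n) z = of_nat s + hit (\<lambda>u. rho (Suc n) z (s + u) (l + 1) = Suc n)"
    unfolding completion_time_def by (rule hit_shift[OF before])
  also have "hit (\<lambda>u. rho n (shz s z) u (l + 1) = n) \<le> hit (\<lambda>u. rho (Suc n) z (s + u) (l + 1) = Suc n)"
  proof (rule hit_mono)
    fix u assume h: "rho (Suc n) z (s + u) (l + 1) = Suc n"
    have "rho (Suc n) z (s + u) (l + 1) \<le> rho n (shz s z) u (l + 1) + 1"
      using coupling[OF fs(1), of n u] by auto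
    moreover have "rho n (shz s z) u (l + 1) \<le> n" by (rule rho_le_n) simp
    ultimately show "rho n (shz s z) u (l + 1) = n" using h by simp
  qed
  then have "of_nat s + completion_time l n (shz s z) \<le> of_nat s + hit (\<lambda>u. rho (Suc n) z (s + u) (l + 1) = Suc n)"
    unfolding completion_time_def by (rule add_left_mono)
  finally show ?thesis by (simp add: s_def)
qed

lemma ennreal_shift_minus: "(of_nat s + a) - (of_nat s + b) = a - (b::ennreal)"
proof (cases b rule: ennreal_cases)
  case (real y)
  note b = this
  show ?thesis
  proof (cases a rule: ennreal_cases)
    case (real x)
    have "(of_nat s + a) - (of_nat s + b) = ennreal (real s + x) - ennreal (real s + y)"
      using b real by (simp only: ennreal_of_nat_eq_real_of_nat ennreal_plus of_nat_0_le_iff)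
    also have "\<dots> = ennreal ((real s + x) - (real s + y))"
      using b by (intro ennreal_minus) simp
    also have "\<dots> = ennreal (x - y)" by simp
    also have "\<dots> = a - b" using b real by (simp only: ennreal_minus)
    finally show ?thesis .
  next
    case top
    have "of_nat s + b \<noteq> top" using b by (simp add: ennreal_of_nat_eq_real_of_nat flip: ennreal_plus)
    then have "(of_nat s + a) - (of_nat s + b) = top" using top by (simp add: top_add add_top ennreal_top_minus)
    then show ?thesis using top b by (simp add: ennreal_top_minus)
  qed
next
  case top
  then show ?thesis by (simp add: minus_top_ennreal)
qed

definition tl1 :: "nat \<Rightarrow> ((nat \<times> nat) \<Rightarrow> bool) \<Rightarrow> ennreal" where
  "tl1 k \<omega> = (if 1 \<le> cnt (curry \<omega>) k then 0 else 1)"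

lemma tl1_meas: "tl1 k \<in> borel_measurable (erasure_space p)"
proof -
  have "(\<lambda>\<omega>. (\<lambda>c::nat. if 1 \<le> c then 0 else 1 :: ennreal) (cnt (curry \<omega>) k)) \<in> borel_measurable (erasure_space p)"
    by (rule measurable_compose[OF cnt_meas]) simp
  then show ?thesis by (simp add: tl1_def[abs_def])
qed

lemma sg_meas: "(\<lambda>\<omega>. first_link_time m (curry \<omega>)) \<in> borel_measurable (erasure_space p)"
  unfolding flt_alt by (rule hit_meas[where P="\<lambda>t \<omega>. m \<le> cnt (curry \<omega>) t", OF meas_cs1[OF cnt_meas]])

lemma ct_meas: "(\<lambda>\<omega>. completion_time l m (curry \<omega>)) \<in> borel_measurable (erasure_space p)"
  unfolding completion_time_def
  by (rule hit_meas[where P="\<lambda>t \<omega>. rho m (curry \<omega>) t (l + 1) = m", OF meas_cs1[OF rho_meas]])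

lemma Esg1:
  assumes p: "0 \<le> p 1" "p 1 < 1"
  shows "(\<integral>\<^sup>+\<omega>. first_link_time 1 (curry \<omega>) \<partial>erasure_space p) = ennreal (1 / (1 - p 1))"
proof -
  interpret EP: prob_space "erasure_space p" by (rule prob_E)
  have tl: "(\<integral>\<^sup>+\<omega>. tl1 k \<omega> \<partial>erasure_space p) = ennreal (p 1 ^ k)" for k
  proof (induction k)
    case 0
    have "tl1 0 = (\<lambda>_. 1)" by (simp add: fun_eq_iff tl1_def)
    moreover have "emeasure (erasure_space p) UNIV = 1" using EP.emeasure_space_1 by simp
    ultimately show ?case by simp
  next
    case (Suc k)
    have rec: "tl1 (Suc k) (consw (x,\<omega>)) = (if x 1 then 0 else tl1 k \<omega>)" for x \<omega>
      by (simp add: tl1_def curry_consw cnt_consz del: cnt.simps(2))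
    have "(\<integral>\<^sup>+\<omega>. tl1 (Suc k) \<omega> \<partial>erasure_space p) =
       ennreal (1 - p 1) * (\<integral>\<^sup>+\<omega>. 0 \<partial>erasure_space p) + ennreal (p 1) * (\<integral>\<^sup>+\<omega>. tl1 k \<omega> \<partial>erasure_space p)"
      by (rule step_int[OF tl1_meas _ tl1_meas rec]) (use p in auto)
    also have "\<dots> = ennreal (p 1 ^ Suc k)" using p Suc by (simp add: ennreal_mult)
    finally show ?case .
  qed
  have pt: "first_link_time 1 (curry \<omega>) = (\<Sum>k. tl1 k \<omega>)" for \<omega>
    unfolding flt_alt tl1_def
    by (rule hit_tail) (meson cnt_mono le_SucI order_refl order_trans)
  have "(\<integral>\<^sup>+\<omega>. first_link_time 1 (curry \<omega>) \<partial>erasure_space p) = (\<integral>\<^sup>+\<omega>. (\<Sum>k. tl1 k \<omega>) \<partial>erasure_space p)"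
    by (simp only: pt)
  also have "\<dots> = (\<Sum>k. (\<integral>\<^sup>+\<omega>. tl1 k \<omega> \<partial>erasure_space p))"
    by (rule nn_integral_suminf) (rule tl1_meas)
  also have "\<dots> = (\<Sum>k. ennreal (p 1 ^ k))" by (simp add: tl)
  also have "\<dots> = ennreal (\<Sum>k. p 1 ^ k)"
    using p by (intro suminf_ennreal2) (auto intro: summable_geometric)
  also have "\<dots> = ennreal (1 / (1 - p 1))" using p by (simp add: suminf_geometric)
  finally show ?thesis .
qed

lemma Esg:
  assumes p: "0 \<le> p 1" "p 1 < 1"
  shows "(\<integral>\<^sup>+\<omega>. first_link_time m (curry \<omega>) \<partial>erasure_space p) = ennreal (real m / (1 - p 1))"
proof (induction m)
  case 0
  have "first_link_time 0 z = 0" for z by (simp add: flt_alt hit_def)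
  then show ?case by simp
next
  case (Suc m)
  have pt: "first_link_time (Suc m) (curry \<omega>) = first_link_time 1 (curry \<omega>) + hinf (\<lambda>\<omega>. first_link_time m (curry \<omega>)) \<omega>" for \<omega>
  proof (cases "\<exists>t. 1 \<le> cnt (curry \<omega>) t")
    case True
    define z where "z = curry \<omega>"
    define s where "s = (LEAST t. 1 \<le> cnt z t)"
    have ex: "\<exists>t. 1 \<le> cnt z t" using True z_def by simp
    have a: "first_link_time (Suc m) z = of_nat s + first_link_time m (shz s z)"
      using sigma_split[OF ex, of m] by (simp add: flt_alt s_def)
    have b: "first_link_time 1 z = of_nat s" unfolding flt_alt hit_def s_def using ex by simp
    have c: "hinf (\<lambda>\<omega>. first_link_time m (curry \<omega>)) \<omega> = first_link_time m (shz s z)"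
      using True by (simp add: hinf_def curry_shw s1_def s_def z_def)
    show ?thesis using a b c by (simp add: z_def)
  next
    case False
    have "\<not> (\<exists>t. Suc m \<le> cnt (curry \<omega>) t)"
    proof
      assume "\<exists>t. Suc m \<le> cnt (curry \<omega>) t"
      then obtain t where "Suc m \<le> cnt (curry \<omega>) t" by blast
      then have "1 \<le> cnt (curry \<omega>) t" by simp
      with False show False by blast
    qed
    then show ?thesis using False by (simp add: flt_alt hinf_def hit_def)
  qed
  have "(\<integral>\<^sup>+\<omega>. first_link_time (Suc m) (curry \<omega>) \<partial>erasure_space p)
     = (\<integral>\<^sup>+\<omega>. first_link_time 1 (curry \<omega>) + hinf (\<lambda>\<omega>. first_link_time m (curry \<omega>)) \<omega> \<partial>erasure_space p)"
    by (simp only: pt)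
  also have "\<dots> = (\<integral>\<^sup>+\<omega>. first_link_time 1 (curry \<omega>) \<partial>erasure_space p)
        + (\<integral>\<^sup>+\<omega>. hinf (\<lambda>\<omega>. first_link_time m (curry \<omega>)) \<omega> \<partial>erasure_space p)"
    by (rule nn_integral_add[OF sg_meas hinf_meas[OF sg_meas]])
  also have "\<dots> = ennreal (1 / (1 - p 1)) + ennreal (real m / (1 - p 1))"
    by (simp only: Esg1[where p=p, OF p] SM[where p=p, OF sg_meas p] Suc)
  also have "\<dots> = ennreal (real (Suc m) / (1 - p 1))"
    using p by (subst ennreal_plus[symmetric]) (auto simp: add_divide_distrib)
  finally show ?case .
qed

lemma tau_mono:
  assumes l: "1 \<le> l" and p: "0 \<le> p 1" "p 1 < 1"
  shows "(\<integral>\<^sup>+\<omega>. completion_time l n (curry \<omega>) - first_link_time n (curry \<omega>) \<partial>erasure_space p)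
     \<le> (\<integral>\<^sup>+\<omega>. completion_time l (Suc n) (curry \<omega>) - first_link_time (Suc n) (curry \<omega>) \<partial>erasure_space p)"
proof -
  define tau where "tau = (\<lambda>m \<omega>. completion_time l m (curry \<omega>) - first_link_time m (curry \<omega>))"
  have tm: "tau m \<in> borel_measurable (erasure_space p)" for m
    unfolding tau_def by (rule borel_measurable_minus_ennreal[OF ct_meas sg_meas])
  have pt: "hinf (tau n) \<omega> \<le> tau (Suc n) \<omega>" for \<omega>
  proof (cases "\<exists>t. 1 \<le> cnt (curry \<omega>) t")
    case True
    define z where "z = curry \<omega>"
    define s where "s = (LEAST t. 1 \<le> cnt z t)"
    have ex: "\<exists>t. 1 \<le> cnt z t" using True z_def by simp
    have s1e: "s1 \<omega> = s" by (simp only: s1_def s_def z_def)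
    have h: "hinf (tau n) \<omega> = completion_time l n (shz s z) - first_link_time n (shz s z)"
      by (simp only: hinf_def if_P[OF True] tau_def curry_shw s1e z_def)
    have c: "of_nat s + completion_time l n (shz s z) \<le> completion_time l (Suc n) z"
      unfolding s_def by (rule T_split[OF l ex])
    have f: "first_link_time (Suc n) z = of_nat s + first_link_time n (shz s z)"
      unfolding flt_alt s_def by (rule sigma_split[OF ex])
    have "completion_time l n (shz s z) - first_link_time n (shz s z)
        = (of_nat s + completion_time l n (shz s z)) - (of_nat s + first_link_time n (shz s z))"
      by (rule ennreal_shift_minus[symmetric])
    also have "\<dots> \<le> completion_time l (Suc n) z - first_link_time (Suc n) z"
      unfolding f by (rule ennreal_minus_mono[OF c order_refl])
    finally have calc: "completion_time l n (shz s z) - first_link_time n (shz s z)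
       \<le> completion_time l (Suc n) z - first_link_time (Suc n) z" .
    have te: "tau (Suc n) \<omega> = completion_time l (Suc n) z - first_link_time (Suc n) z"
      by (simp only: tau_def z_def)
    show ?thesis unfolding h te by (rule calc)
  next
    case False
    have "hinf (tau n) \<omega> = 0" by (simp only: hinf_def if_not_P[OF False])
    then show ?thesis by simp
  qed
  have "(\<integral>\<^sup>+\<omega>. tau n \<omega> \<partial>erasure_space p) = (\<integral>\<^sup>+\<omega>. hinf (tau n) \<omega> \<partial>erasure_space p)"
    by (rule SM[where p=p, OF tm p, symmetric])
  also have "\<dots> \<le> (\<integral>\<^sup>+\<omega>. tau (Suc n) \<omega> \<partial>erasure_space p)"
    by (rule nn_integral_mono) (rule pt)
  finally have fin: "(\<integral>\<^sup>+\<omega>. tau n \<omega> \<partial>erasure_space p) \<le> (\<integral>\<^sup>+\<omega>. tau (Suc n) \<omega> \<partial>erasure_space p)" .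
  show ?thesis using fin unfolding tau_def .
qed

theorem mainTheorem4:
  fixes l n :: nat and p :: "nat \<Rightarrow> real"
  assumes "l \<ge> 1" and "n \<ge> 1"
    and "\<And>i. i \<in> {1..l} \<Longrightarrow> 0 \<le> p i \<and> p i < 1"
  shows "(\<integral>\<^sup>+ \<omega>. first_link_time n (curry \<omega>) \<partial>erasure_space p) = ennreal (n / (1 - p 1))
     \<and> (\<integral>\<^sup>+ \<omega>. completion_time l n (curry \<omega>) - first_link_time n (curry \<omega>) \<partial>erasure_space p)
         \<le> (\<integral>\<^sup>+ \<omega>. completion_time l (n + 1) (curry \<omega>) - first_link_time (n + 1) (curry \<omega>) \<partial>erasure_space p)"
proof -
  have p: "0 \<le> p 1" "p 1 < 1" using assms(3)[of 1] assms(1) by auto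
  note A = Esg[where p=p, OF p, of n]
  note B = tau_mono[where p=p, OF assms(1) p, of n, unfolded Suc_eq_plus1]
  show ?thesis by (rule conjI[OF A B])
qed

end
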